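(* Suppose $H$ is a degenerate hypergraph. Then every subgraph of $H$ is degenerate, and every blowup $H(s_1,\dots,s_m)$ of $H$ is degenerate. Moreover, any subgraph of a blowup of a flag is degenerate.
   Context: A hypergraph $H=(V,E)$ has finite vertex set $V$ and edge set $E\subseteq 2^V$; $R(H)=\{|F|:F\in E\}$. $H_1\subseteq H_2$ (subgraph) means there is an injective $f\colon V(H_1)\to V(H_2)$ with $f(F)\in E(H_2)$ for all $F\in E(H_1)$. For $G$ on $n$ vertices, $h_n(G)=\sum_{F\in E(G)}1/\binom{n}{|F|}$; $\pi_n(H)=\max\{h_n(G): G\text{ on } n \text{ vertices}, R(G)\subseteq R(H), H\not\subseteq G\}$ and $\pi(H)=\lim_n\pi_n(H)$. $H$ is degenerate if $\pi(H)=|R(H)|-1$. For $H$ on vertex set $\{1,\dots,m\}$ and positive integers $s_i$, the blowup $H(s_1,\dots,s_m)$ has vertex set $V_1\sqcup\dots\sqcup V_m$, $|V_i|=s_i$, and edge set $\bigcup_{F\in E(H)}\prod_{i\in F}V_i$. A flag is a hypergraph having exactly one edge of each size in its set of edge types. *)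

theory Defs
  imports Complex_Main
begin

type_synonym 'a hg = "'a set \<times> 'a set set"

definition verts :: "'a hg \<Rightarrow> 'a set" where "verts H = fst H"
definition edges :: "'a hg \<Rightarrow> 'a set set" where "edges H = snd H"

definition hypergraph :: "'a hg \<Rightarrow> bool" where
  "hypergraph H \<longleftrightarrow> finite (verts H) \<and> edges H \<subseteq> Pow (verts H)"

definition edge_sizes :: "'a hg \<Rightarrow> nat set" where
  "edge_sizes H = card ` edges H"

definition subgraph :: "'a hg \<Rightarrow> 'b hg \<Rightarrow> bool" where
  "subgraph H1 H2 \<longleftrightarrow> (\<exists>f. inj_on f (verts H1) \<and> f ` verts H1 \<subseteq> verts H2 \<and>
      (\<forall>F\<in>edges H1. f ` F \<in> edges H2))"

definition h_n :: "nat \<Rightarrow> 'a hg \<Rightarrow> real" where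
  "h_n n G = (\<Sum>F\<in>edges G. 1 / real (n choose card F))"

text \<open>pi_n(H); hosts G on n vertices are taken (up to isomorphism) on vertex set {0..<n}.\<close>
definition pi_n :: "'a hg \<Rightarrow> nat \<Rightarrow> real" where
  "pi_n H n = Sup {h_n n G | G :: nat hg. hypergraph G \<and> verts G = {0..<n} \<and>
      edge_sizes G \<subseteq> edge_sizes H \<and> \<not> subgraph H G}"

definition degenerate :: "'a hg \<Rightarrow> bool" where
  "degenerate H \<longleftrightarrow> (\<lambda>n. pi_n H n) \<longlonglongrightarrow> real (card (edge_sizes H)) - 1"

text \<open>Blowup H(s): class of v is {v} \<times> {0..<s v}; edges are transversals of the classes of an edge.\<close>
definition blowup :: "'a hg \<Rightarrow> ('a \<Rightarrow> nat) \<Rightarrow> ('a \<times> nat) hg" where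
  "blowup H s = ({(v, j). v \<in> verts H \<and> j < s v},
     {(\<lambda>v. (v, g v)) ` F | F g. F \<in> edges H \<and> (\<forall>v\<in>F. g v < s v)})"

definition flag :: "'a hg \<Rightarrow> bool" where
  "flag H \<longleftrightarrow> (\<forall>k\<in>edge_sizes H. \<exists>!F. F \<in> edges H \<and> card F = k)"

end

theory Submission
  imports Defs "HOL-Library.FuncSet"
begin

lemma hg_finite_edges: "hypergraph G \<Longrightarrow> finite (edges G)"
  unfolding hypergraph_def by (meson finite_Pow_iff finite_subset)

lemma hg_finite_sizes: "hypergraph G \<Longrightarrow> finite (edge_sizes G)"
  unfolding edge_sizes_def using hg_finite_edges by blast

lemma hg_edge_sub: "hypergraph G \<Longrightarrow> F \<in> edges G \<Longrightarrow> F \<subseteq> verts G"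
  unfolding hypergraph_def by blast

lemma subgraph_trans:
  assumes "subgraph A B" "subgraph B C" shows "subgraph A C"
proof -
  obtain g where g: "inj_on g (verts A)" "g ` verts A \<subseteq> verts B" "\<forall>F\<in>edges A. g ` F \<in> edges B"
    using assms(1) unfolding subgraph_def by blast
  obtain f where f: "inj_on f (verts B)" "f ` verts B \<subseteq> verts C" "\<forall>F\<in>edges B. f ` F \<in> edges C"
    using assms(2) unfolding subgraph_def by blast
  have "inj_on (f \<circ> g) (verts A)" using g f by (meson comp_inj_on inj_on_subset)
  moreover have "(f \<circ> g) ` verts A \<subseteq> verts C" using g f by (auto simp: image_comp[symmetric])
  moreover have "\<forall>F\<in>edges A. (f \<circ> g) ` F \<in> edges C"
  proof
    fix F assume "F \<in> edges A"
    then have "g ` F \<in> edges B" using g by blast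
    then have "f ` (g ` F) \<in> edges C" using f by blast
    then show "(f \<circ> g) ` F \<in> edges C" by (simp add: image_comp)
  qed
  ultimately show ?thesis unfolding subgraph_def by blast
qed

lemma subgraph_sizes:
  assumes "subgraph A B" "hypergraph A" shows "edge_sizes A \<subseteq> edge_sizes B"
proof
  fix k assume "k \<in> edge_sizes A"
  then obtain F where F: "F \<in> edges A" "k = card F" unfolding edge_sizes_def by blast
  obtain f where f: "inj_on f (verts A)" "\<forall>F\<in>edges A. f ` F \<in> edges B"
    using assms(1) unfolding subgraph_def by blast
  have "card (f ` F) = card F" using f(1) hg_edge_sub[OF assms(2) F(1)] by (meson card_image inj_on_subset)
  moreover have "f ` F \<in> edges B" using f(2) F(1) by blast
  ultimately show "k \<in> edge_sizes B" using F(2) unfolding edge_sizes_def by (intro image_eqI[of _ _ "f ` F"]) auto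
qed

lemma h_group:
  assumes "finite (edges G)" "finite T" "card ` edges G \<subseteq> T"
  shows "h_n n G = (\<Sum>k\<in>T. real (card {F\<in>edges G. card F = k}) / real (n choose k))"
proof -
  have "h_n n G = (\<Sum>k\<in>T. \<Sum>F\<in>{F\<in>edges G. card F = k}. 1 / real (n choose card F))"
    unfolding h_n_def using sum.group[OF assms(1,2,3), of "\<lambda>F. 1 / real (n choose card F)"] by simp
  also have "\<dots> = (\<Sum>k\<in>T. \<Sum>F\<in>{F\<in>edges G. card F = k}. 1 / real (n choose k))"
    by (intro sum.cong refl) auto
  also have "\<dots> = (\<Sum>k\<in>T. real (card {F\<in>edges G. card F = k}) / real (n choose k))"
    by simp
  finally show ?thesis .
qed

lemma h_bound:
  assumes "hypergraph G" "card (verts G) = n"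
  shows "h_n n G \<le> card (edge_sizes G)"
proof -
  have fin: "finite (verts G)" using assms unfolding hypergraph_def by blast
  have "h_n n G = (\<Sum>k\<in>edge_sizes G. real (card {F\<in>edges G. card F = k}) / real (n choose k))"
    by (rule h_group) (auto simp: hg_finite_edges[OF assms(1)] hg_finite_sizes[OF assms(1)] edge_sizes_def)
  also have "\<dots> \<le> (\<Sum>k\<in>edge_sizes G. 1)"
  proof (intro sum_mono)
    fix k
    have "{F\<in>edges G. card F = k} \<subseteq> {B. B \<subseteq> verts G \<and> card B = k}"
      using hg_edge_sub[OF assms(1)] by blast
    moreover have "finite {B. B \<subseteq> verts G \<and> card B = k}"
      using fin by simp
    ultimately have "card {F\<in>edges G. card F = k} \<le> card {B. B \<subseteq> verts G \<and> card B = k}"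
      by (intro card_mono)
    then have "card {F\<in>edges G. card F = k} \<le> n choose k"
      using n_subsets[OF fin, of k] assms(2) by simp
    then show "real (card {F\<in>edges G. card F = k}) / real (n choose k) \<le> 1"
      by (cases "n choose k = 0") (auto simp: divide_le_eq_1)
  qed
  finally show ?thesis by simp
qed

lemma h_nonneg: "0 \<le> h_n n G"
  unfolding h_n_def by (intro sum_nonneg) auto

definition piset :: "'a hg \<Rightarrow> nat \<Rightarrow> real set" where
  "piset H n = {h_n n G | G :: nat hg. hypergraph G \<and> verts G = {0..<n} \<and>
      edge_sizes G \<subseteq> edge_sizes H \<and> \<not> subgraph H G}"

lemma pi_n_piset: "pi_n H n = Sup (piset H n)"
  unfolding pi_n_def piset_def by simp

lemma piset_ne:
  assumes "edges H \<noteq> {}" shows "piset H n \<noteq> {}"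
proof -
  let ?G = "({0..<n}, {}) :: nat hg"
  have "hypergraph ?G" "verts ?G = {0..<n}" "edge_sizes ?G \<subseteq> edge_sizes H"
    by (auto simp: hypergraph_def verts_def edges_def edge_sizes_def)
  moreover have "\<not> subgraph H ?G" using assms by (auto simp: subgraph_def edges_def)
  ultimately show ?thesis unfolding piset_def by blast
qed

lemma piset_bdd:
  assumes "hypergraph H" "x \<in> piset H n" shows "x \<le> card (edge_sizes H)"
proof -
  obtain G :: "nat hg" where G: "x = h_n n G" "hypergraph G" "verts G = {0..<n}"
    "edge_sizes G \<subseteq> edge_sizes H" using assms(2) unfolding piset_def by blast
  have "x \<le> card (edge_sizes G)" using h_bound[OF G(2)] G by simp
  also have "\<dots> \<le> card (edge_sizes H)" using G(4) hg_finite_sizes[OF assms(1)] by (simp add: card_mono)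
  finally show ?thesis .
qed

lemma pi_upper:
  assumes "hypergraph H" "hypergraph G" "verts G = {0..<n}"
    "edge_sizes G \<subseteq> edge_sizes H" "\<not> subgraph H G"
  shows "h_n n G \<le> pi_n H n"
proof -
  have mem: "h_n n G \<in> piset H n" unfolding piset_def using assms(2-5) by blast
  have "bdd_above (piset H n)" using piset_bdd[OF assms(1)] by (meson bdd_aboveI)
  then show ?thesis unfolding pi_n_piset using mem by (rule cSup_upper[rotated])
qed

lemma pi_least:
  assumes "edges H \<noteq> {}"
    "\<And>G :: nat hg. hypergraph G \<Longrightarrow> verts G = {0..<n} \<Longrightarrow>
        edge_sizes G \<subseteq> edge_sizes H \<Longrightarrow> \<not> subgraph H G \<Longrightarrow> h_n n G \<le> c"
  shows "pi_n H n \<le> c"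
  unfolding pi_n_piset
  by (rule cSup_least) (use piset_ne[OF assms(1)] assms(2) in \<open>auto simp: piset_def\<close>)

lemma pi_le_card:
  assumes "hypergraph H" "edges H \<noteq> {}" shows "pi_n H n \<le> card (edge_sizes H)"
  unfolding pi_n_piset
  by (rule cSup_least) (use piset_ne[OF assms(2)] piset_bdd[OF assms(1)] in auto)

lemma pi_lower:
  assumes "hypergraph H" "edges H \<noteq> {}" "\<forall>k\<in>edge_sizes H. k \<le> n"
  shows "real (card (edge_sizes H)) - 1 \<le> pi_n H n"
proof -
  obtain F0 where F0: "F0 \<in> edges H" using assms(2) by blast
  define k0 where "k0 = card F0"
  have k0R: "k0 \<in> edge_sizes H" using F0 unfolding k0_def edge_sizes_def by blast
  define G :: "nat hg" where "G = ({0..<n}, {F. F \<subseteq> {0..<n} \<and> card F \<in> edge_sizes H - {k0}})"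
  have hG: "hypergraph G" unfolding G_def hypergraph_def verts_def edges_def by auto
  have fE: "finite (edges G)" using hg_finite_edges[OF hG] .
  have sz: "edge_sizes G \<subseteq> edge_sizes H" unfolding G_def edge_sizes_def edges_def by auto
  have ns: "\<not> subgraph H G"
  proof
    assume "subgraph H G"
    then obtain f where f: "inj_on f (verts H)" "\<forall>F\<in>edges H. f ` F \<in> edges G"
      unfolding subgraph_def by blast
    have "card (f ` F0) = k0" unfolding k0_def
      using f(1) hg_edge_sub[OF assms(1) F0] by (meson card_image inj_on_subset)
    moreover have "f ` F0 \<in> edges G" using f F0 by blast
    ultimately show False unfolding G_def edges_def by auto
  qed
  have "h_n n G = (\<Sum>k\<in>edge_sizes H - {k0}. real (card {F\<in>edges G. card F = k}) / real (n choose k))"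
    by (rule h_group) (use fE hg_finite_sizes[OF assms(1)] in \<open>auto simp: G_def edges_def\<close>)
  also have "\<dots> = (\<Sum>k\<in>edge_sizes H - {k0}. 1)"
  proof (intro sum.cong refl)
    fix k assume k: "k \<in> edge_sizes H - {k0}"
    have "{F\<in>edges G. card F = k} = {B. B \<subseteq> {0..<n} \<and> card B = k}"
      using k unfolding G_def edges_def by auto
    then have "card {F\<in>edges G. card F = k} = n choose k" using n_subsets[of "{0..<n}" k] by simp
    moreover have "n choose k > 0" using assms(3) k by simp
    ultimately show "real (card {F\<in>edges G. card F = k}) / real (n choose k) = 1" by simp
  qed
  also have "\<dots> = real (card (edge_sizes H)) - 1"
  proof -
    have c: "card (edge_sizes H - {k0}) = card (edge_sizes H) - 1"
      using k0R hg_finite_sizes[OF assms(1)] by (simp add: card_Diff_singleton)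
    have "card (edge_sizes H) \<ge> 1"
      using k0R hg_finite_sizes[OF assms(1)] by (metis One_nat_def Suc_leI card_gt_0_iff empty_iff)
    then show ?thesis using c by (simp add: of_nat_diff)
  qed
  finally have "h_n n G = real (card (edge_sizes H)) - 1" .
  moreover have "verts G = {0..<n}" by (simp add: G_def verts_def)
  ultimately show ?thesis using pi_upper[OF assms(1) hG _ sz ns, of n] by simp
qed

lemma h_union:
  assumes "finite E1" "finite E2" "E1 \<inter> E2 = {}"
  shows "h_n n (V, E1 \<union> E2) = h_n n (V, E1) + h_n n (W, E2)"
  unfolding h_n_def edges_def using assms by (simp add: sum.union_disjoint)

lemma h_layers:
  assumes "finite T" "\<forall>k\<in>T. k \<le> n"
  shows "h_n n (V, {F. F \<subseteq> {0..<n} \<and> card F \<in> T}) = card T"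
proof -
  let ?E = "{F. F \<subseteq> {0..<(n::nat)} \<and> card F \<in> T}"
  have fE: "finite ?E" by (rule finite_subset[of _ "Pow {0..<n}"]) auto
  have "h_n n (V, ?E) = (\<Sum>k\<in>T. real (card {F\<in>edges (V, ?E). card F = k}) / real (n choose k))"
    by (rule h_group) (use fE assms in \<open>auto simp: edges_def\<close>)
  then have "h_n n (V, ?E) = (\<Sum>k\<in>T. real (card {F\<in>?E. card F = k}) / real (n choose k))"
    by (simp add: edges_def)
  also have "\<dots> = (\<Sum>k\<in>T. 1)"
  proof (intro sum.cong refl)
    fix k assume k: "k \<in> T"
    have "{F\<in>?E. card F = k} = {B. B \<subseteq> {0..<n} \<and> card B = k}" using k by auto
    then have "card {F\<in>?E. card F = k} = n choose k" using n_subsets[of "{0..<n}" k] by simp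
    moreover have "n choose k > 0" using assms(2) k by simp
    ultimately show "real (card {F\<in>?E. card F = k}) / real (n choose k) = 1" by simp
  qed
  finally show ?thesis by simp
qed

lemma sizes_bounded: "finite (A::nat set) \<Longrightarrow> \<exists>N. \<forall>n\<ge>N. \<forall>k\<in>A. k \<le> n"
  by (metis finite_nat_set_iff_bounded_le order.trans)

lemma pi_sub_le:
  assumes hK: "hypergraph K" and eK: "edges K \<noteq> {}" and hH: "hypergraph H" and sub: "subgraph K H"
    and n: "\<forall>k\<in>edge_sizes H. k \<le> n"
  shows "pi_n K n \<le> pi_n H n - (real (card (edge_sizes H)) - real (card (edge_sizes K)))"
proof (rule pi_least[OF eK])
  fix G :: "nat hg" assume hG: "hypergraph G" and vG: "verts G = {0..<n}"
    and sG: "edge_sizes G \<subseteq> edge_sizes K" and nsG: "\<not> subgraph K G"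
  have RKH: "edge_sizes K \<subseteq> edge_sizes H" using subgraph_sizes[OF sub hK] .
  have fRH: "finite (edge_sizes H)" using hg_finite_sizes[OF hH] .
  define T where "T = edge_sizes H - edge_sizes K"
  define E2 where "E2 = {F. F \<subseteq> {0..<n} \<and> card F \<in> T}"
  define G' :: "nat hg" where "G' = ({0..<n}, edges G \<union> E2)"
  have fE2: "finite E2" unfolding E2_def by (rule finite_subset[of _ "Pow {0..<n}"]) auto
  have fEG: "finite (edges G)" using hg_finite_edges[OF hG] .
  have disj: "edges G \<inter> E2 = {}"
    using sG unfolding E2_def T_def edge_sizes_def by auto
  have hG': "hypergraph G'" using hG vG unfolding G'_def E2_def hypergraph_def verts_def edges_def by auto
  have vG': "verts G' = {0..<n}" unfolding G'_def verts_def by simp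
  have sG': "edge_sizes G' \<subseteq> edge_sizes H"
    using sG RKH unfolding G'_def E2_def T_def edge_sizes_def edges_def by auto
  have nsG': "\<not> subgraph H G'"
  proof
    assume "subgraph H G'"
    then have "subgraph K G'" using subgraph_trans[OF sub] by blast
    then obtain f where f: "inj_on f (verts K)" "f ` verts K \<subseteq> verts G'" "\<forall>F\<in>edges K. f ` F \<in> edges G'"
      unfolding subgraph_def by blast
    have "\<forall>F\<in>edges K. f ` F \<in> edges G"
    proof
      fix F assume F: "F \<in> edges K"
      have "card (f ` F) = card F" using f(1) hg_edge_sub[OF hK F] by (meson card_image inj_on_subset)
      then have "card (f ` F) \<in> edge_sizes K" using F unfolding edge_sizes_def by simp
      then have "f ` F \<notin> E2" unfolding E2_def T_def by auto
      then show "f ` F \<in> edges G" using f(3) F unfolding G'_def edges_def by auto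
    qed
    moreover have "f ` verts K \<subseteq> verts G" using f(2) vG unfolding G'_def verts_def by simp
    ultimately have "subgraph K G" using f(1) unfolding subgraph_def by blast
    with nsG show False by blast
  qed
  have "h_n n G' = h_n n G + card T"
  proof -
    have "h_n n G' = h_n n ({0..<n}, edges G) + h_n n ({0..<n}, E2)"
      unfolding G'_def by (rule h_union[OF fEG fE2 disj])
    moreover have "h_n n ({0..<n}, edges G) = h_n n G" unfolding h_n_def edges_def by simp
    moreover have "h_n n ({0..<n}, E2) = card T" unfolding E2_def
      by (rule h_layers) (use fRH n in \<open>auto simp: T_def\<close>)
    ultimately show ?thesis by simp
  qed
  moreover have "card T = card (edge_sizes H) - card (edge_sizes K)"
    unfolding T_def using RKH fRH by (simp add: card_Diff_subset finite_subset)
  moreover have "card (edge_sizes K) \<le> card (edge_sizes H)" using RKH fRH by (simp add: card_mono)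
  moreover have "h_n n G' \<le> pi_n H n" using pi_upper[OF hH hG' vG' sG' nsG'] .
  ultimately show "h_n n G \<le> pi_n H n - (real (card (edge_sizes H)) - real (card (edge_sizes K)))"
    by (simp add: of_nat_diff)
qed

lemma degen_sub:
  assumes hK: "hypergraph K" and eK: "edges K \<noteq> {}" and hH: "hypergraph H" and sub: "subgraph K H"
    and dH: "degenerate H"
  shows "degenerate K"
proof -
  have RKH: "edge_sizes K \<subseteq> edge_sizes H" using subgraph_sizes[OF sub hK] .
  obtain N where N: "\<forall>n\<ge>N. \<forall>k\<in>edge_sizes H. k \<le> n" using sizes_bounded[OF hg_finite_sizes[OF hH]] by blast
  let ?r = "real (card (edge_sizes H))" and ?r' = "real (card (edge_sizes K))"
  have lo: "\<forall>\<^sub>F n in sequentially. ?r' - 1 \<le> pi_n K n"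
    using N RKH by (intro eventually_sequentiallyI[of N]) (auto intro!: pi_lower[OF hK eK])
  have up: "\<forall>\<^sub>F n in sequentially. pi_n K n \<le> pi_n H n - (?r - ?r')"
    using N by (intro eventually_sequentiallyI[of N]) (auto intro!: pi_sub_le[OF hK eK hH sub])
  have "(\<lambda>n. pi_n H n - (?r - ?r')) \<longlonglongrightarrow> (?r - 1) - (?r - ?r')"
    using dH unfolding degenerate_def by (intro tendsto_diff) auto
  then have t: "(\<lambda>n. pi_n H n - (?r - ?r')) \<longlonglongrightarrow> ?r' - 1" by simp
  show ?thesis unfolding degenerate_def
    by (rule tendsto_sandwich[OF lo up tendsto_const t])
qed

definition injs :: "'a set \<Rightarrow> nat \<Rightarrow> ('a \<Rightarrow> nat) set" where
  "injs V n = {\<phi> \<in> PiE V (\<lambda>_. {0..<n}). inj_on \<phi> V}"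

lemma finite_injs: "finite V \<Longrightarrow> finite (injs V n)"
  unfolding injs_def by (rule finite_subset[of _ "PiE V (\<lambda>_. {0..<n})"]) (auto intro: finite_PiE)

lemma injs_ne: assumes "finite V" "card V \<le> n" shows "injs V n \<noteq> {}"
proof -
  obtain f where f: "f ` V \<subseteq> {0..<n}" "inj_on f V"
    using card_le_inj[OF assms(1), of "{0..<n}"] assms(2) by auto
  have "restrict f V \<in> injs V n" unfolding injs_def using f
    by (auto simp: inj_on_def)
  then show ?thesis by blast
qed

lemma perm_exists:
  assumes "S \<subseteq> {0..<n::nat}" "T \<subseteq> {0..<n}" "card S = card T"
  shows "\<exists>\<pi>. inj_on \<pi> {0..<n} \<and> \<pi> ` {0..<n} \<subseteq> {0..<n} \<and> \<pi> ` S = T"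
proof -
  have fS: "finite S" "finite T" using assms finite_subset by auto
  obtain g where g: "bij_betw g S T" using finite_same_card_bij[OF fS assms(3)] by blast
  have "card ({0..<n} - S) = card ({0..<n} - T)"
    using assms fS by (simp add: card_Diff_subset)
  then obtain h where h: "bij_betw h ({0..<n} - S) ({0..<n} - T)"
    using finite_same_card_bij by (metis finite_Diff finite_atLeastLessThan)
  define \<pi> where "\<pi> x = (if x \<in> S then g x else h x)" for x
  have b1: "bij_betw \<pi> S T" using g unfolding \<pi>_def by (rule bij_betw_cong[THEN iffD1, rotated]) auto
  have b2: "bij_betw \<pi> ({0..<n} - S) ({0..<n} - T)" using h unfolding \<pi>_def
    by (rule bij_betw_cong[THEN iffD1, rotated]) auto
  have "bij_betw \<pi> (S \<union> ({0..<n} - S)) (T \<union> ({0..<n} - T))"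
    by (rule bij_betw_combine[OF b1 b2]) auto
  moreover have "S \<union> ({0..<n} - S) = {0..<n}" "T \<union> ({0..<n} - T) = {0..<n}" using assms by auto
  ultimately have "bij_betw \<pi> {0..<n} {0..<n}" by simp
  then show ?thesis using b1 by (auto simp: bij_betw_def)
qed

definition fib :: "'a set \<Rightarrow> nat \<Rightarrow> 'a set \<Rightarrow> nat set \<Rightarrow> ('a \<Rightarrow> nat) set" where
  "fib V n A S = {\<phi> \<in> injs V n. \<phi> ` A = S}"

lemma fib_le:
  assumes V: "finite V" and A: "A \<subseteq> V" and S: "S \<subseteq> {0..<n}" and T: "T \<subseteq> {0..<n}"
    and c: "card S = card T"
  shows "card (fib V n A S) \<le> card (fib V n A T)"
proof -
  obtain \<pi> where \<pi>: "inj_on \<pi> {0..<n}" "\<pi> ` {0..<n} \<subseteq> {0..<n}" "\<pi> ` S = T"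
    using perm_exists[OF S T c] by blast
  define \<Phi> where "\<Phi> \<phi> = restrict (\<pi> \<circ> \<phi>) V" for \<phi> :: "'a \<Rightarrow> nat"
  have "inj_on \<Phi> (fib V n A S)"
  proof
    fix \<phi>1 \<phi>2 assume m: "\<phi>1 \<in> fib V n A S" "\<phi>2 \<in> fib V n A S" and e: "\<Phi> \<phi>1 = \<Phi> \<phi>2"
    show "\<phi>1 = \<phi>2"
    proof
      fix u show "\<phi>1 u = \<phi>2 u"
      proof (cases "u \<in> V")
        case True
        then have "\<pi> (\<phi>1 u) = \<pi> (\<phi>2 u)" using e unfolding \<Phi>_def by (metis comp_apply restrict_apply')
        moreover have "\<phi>1 u \<in> {0..<n}" "\<phi>2 u \<in> {0..<n}" using m True unfolding fib_def injs_def by auto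
        ultimately show ?thesis using \<pi>(1) by (meson inj_onD)
      next
        case False
        then show ?thesis using m unfolding fib_def injs_def by (auto simp: PiE_def extensional_def)
      qed
    qed
  qed
  moreover have "\<Phi> ` fib V n A S \<subseteq> fib V n A T"
  proof
    fix \<psi> assume "\<psi> \<in> \<Phi> ` fib V n A S"
    then obtain \<phi> where \<phi>: "\<phi> \<in> fib V n A S" "\<psi> = \<Phi> \<phi>" by blast
    have \<phi>i: "\<phi> \<in> PiE V (\<lambda>_. {0..<n})" "inj_on \<phi> V" "\<phi> ` A = S"
      using \<phi>(1) unfolding fib_def injs_def by auto
    have "\<forall>u\<in>V. \<pi> (\<phi> u) \<in> {0..<n}" using \<phi>i(1) \<pi>(2) by (auto simp: PiE_def Pi_def image_subset_iff)
    then have "\<psi> \<in> PiE V (\<lambda>_. {0..<n})" unfolding \<phi>(2) \<Phi>_def by auto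
    moreover have "inj_on \<psi> V"
    proof -
      have "inj_on (\<pi> \<circ> \<phi>) V" using \<phi>i \<pi>(1)
        by (intro comp_inj_on) (auto intro: inj_on_subset simp: PiE_def Pi_def)
      then show ?thesis unfolding \<phi>(2) \<Phi>_def by (simp add: inj_on_def)
    qed
    moreover have "\<psi> ` A = T" using \<phi>i(3) \<pi>(3) A unfolding \<phi>(2) \<Phi>_def
      by (auto simp: image_comp[symmetric] restrict_def image_def subset_iff)
    ultimately show "\<psi> \<in> fib V n A T" unfolding fib_def injs_def by blast
  qed
  moreover have "finite (fib V n A T)" unfolding fib_def using finite_injs[OF V] by simp
  ultimately show ?thesis by (meson card_inj_on_le)
qed

lemma fib_card_const:
  assumes V: "finite V" and A: "A \<subseteq> V" "card A = k" and n: "card V \<le> n"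
    and S: "S \<subseteq> {0..<n}" "card S = k"
  shows "card (fib V n A S) = card (fib V n A {0..<k})"
proof -
  have "k \<le> n" using A n V by (metis card_mono order_trans)
  then have K: "{0..<k} \<subseteq> {0..<n}" "card {0..<k} = k" by auto
  show ?thesis using fib_le[OF V A(1) S(1) K(1)] fib_le[OF V A(1) K(1) S(1)] S(2) K(2) by simp
qed

lemma count_fibs:
  assumes V: "finite V" and A: "A \<subseteq> V" "card A = k" and n: "card V \<le> n"
    and E: "E \<subseteq> {S. S \<subseteq> {0..<n} \<and> card S = k}"
  shows "card {\<phi>\<in>injs V n. \<phi> ` A \<in> E} = card E * card (fib V n A {0..<k})"
proof -
  have fE: "finite E" using E by (rule finite_subset) simp
  have eq: "{\<phi>\<in>injs V n. \<phi> ` A \<in> E} = (\<Union>S\<in>E. fib V n A S)" unfolding fib_def by auto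
  have "card (\<Union>S\<in>E. fib V n A S) = (\<Sum>S\<in>E. card (fib V n A S))"
    by (rule card_UN_disjoint[OF fE]) (auto simp: fib_def intro: finite_subset[OF _ finite_injs[OF V]])
  also have "\<dots> = (\<Sum>S\<in>E. card (fib V n A {0..<k}))"
    by (intro sum.cong refl fib_card_const[OF V A n]) (use E in auto)
  finally show ?thesis using eq by simp
qed

lemma count_image:
  assumes V: "finite V" and A: "A \<subseteq> V" "card A = k" and n: "card V \<le> n"
    and E: "E \<subseteq> {S. S \<subseteq> {0..<n} \<and> card S = k}"
  shows "real (card {\<phi>\<in>injs V n. \<phi> ` A \<in> E}) * real (n choose k) = real (card E) * real (card (injs V n))"
proof -
  let ?c = "card (fib V n A {0..<k})"
  let ?All = "{S. S \<subseteq> {0..<n} \<and> card S = k}"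
  have "{\<phi>\<in>injs V n. \<phi> ` A \<in> ?All} = injs V n"
  proof (intro set_eqI iffI)
    fix \<phi> assume "\<phi> \<in> injs V n"
    then have "\<phi> \<in> PiE V (\<lambda>_. {0..<n})" "inj_on \<phi> V" unfolding injs_def by auto
    then have "\<phi> ` A \<subseteq> {0..<n}" "card (\<phi> ` A) = k" using A
      by (auto simp: PiE_def Pi_def card_image inj_on_subset)
    then show "\<phi> \<in> {\<phi>\<in>injs V n. \<phi> ` A \<in> ?All}" using \<open>\<phi> \<in> injs V n\<close> by simp
  qed simp
  then have all: "card (injs V n) = (n choose k) * ?c"
    using count_fibs[OF V A n, of ?All] n_subsets[of "{0..<n}" k] by simp
  have "card {\<phi>\<in>injs V n. \<phi> ` A \<in> E} = card E * ?c" using count_fibs[OF V A n E] .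
  then show ?thesis using all by (simp add: of_nat_mult[symmetric] del: of_nat_mult)
qed

lemma flag_pi:
  assumes hF: "hypergraph Fl" and fl: "flag Fl" and eF: "edges Fl \<noteq> {}" and n: "card (verts Fl) \<le> n"
  shows "pi_n Fl n \<le> real (card (edge_sizes Fl)) - 1"
proof (rule pi_least[OF eF])
  fix G :: "nat hg" assume hG: "hypergraph G" and vG: "verts G = {0..<n}"
    and sG: "edge_sizes G \<subseteq> edge_sizes Fl" and nsG: "\<not> subgraph Fl G"
  define V where "V = verts Fl"
  define R where "R = edge_sizes Fl"
  have fV: "finite V" using hF unfolding V_def hypergraph_def by blast
  have fR: "finite R" using hg_finite_sizes[OF hF] unfolding R_def .
  obtain Ek where Ek: "\<forall>k\<in>R. Ek k \<in> edges Fl \<and> card (Ek k) = k"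
    using fl unfolding flag_def R_def by metis
  have uniq: "F = Ek (card F)" if "F \<in> edges Fl" for F
  proof -
    have "card F \<in> R" using that unfolding R_def edge_sizes_def by simp
    then show ?thesis using fl Ek that unfolding flag_def R_def by metis
  qed
  have EkV: "Ek k \<subseteq> V" if "k \<in> R" for k using Ek that hg_edge_sub[OF hF] unfolding V_def by blast
  define I where "I = injs V n"
  define m where "m = card I"
  have fI: "finite I" unfolding I_def using finite_injs[OF fV] .
  have mpos: "m > 0" unfolding m_def I_def using injs_ne[OF fV] n fI I_def V_def
    by (simp add: card_gt_0_iff)
  define Gk where "Gk k = {F\<in>edges G. card F = k}" for k
  define Ak where "Ak k = {\<phi>\<in>I. \<phi> ` Ek k \<in> Gk k}" for k
  have cnt: "real (card (Ak k)) = real (card (Gk k)) * real m / real (n choose k)" if k: "k \<in> R" for k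
  proof -
    have ck: "card (Ek k) = k" using Ek k by blast
    have "card V \<le> n" using n unfolding V_def .
    moreover have "Gk k \<subseteq> {S. S \<subseteq> {0..<n} \<and> card S = k}"
      using hg_edge_sub[OF hG] vG unfolding Gk_def by auto
    ultimately have e: "real (card (Ak k)) * real (n choose k) = real (card (Gk k)) * real m"
      unfolding Ak_def I_def m_def using count_image[OF fV EkV[OF k] ck] by blast
    have "k \<le> n" using ck EkV[OF k] fV n unfolding V_def by (metis card_mono order_trans)
    then have "real (n choose k) > 0" by simp
    with e show ?thesis by (simp add: field_simps)
  qed
  have cover: "I \<subseteq> (\<Union>k\<in>R. I - Ak k)"
  proof
    fix \<phi> assume \<phi>: "\<phi> \<in> I"
    show "\<phi> \<in> (\<Union>k\<in>R. I - Ak k)"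
    proof (rule ccontr)
      assume "\<phi> \<notin> (\<Union>k\<in>R. I - Ak k)"
      then have all: "\<forall>k\<in>R. \<phi> ` Ek k \<in> Gk k" using \<phi> unfolding Ak_def by blast
      have "inj_on \<phi> V" "\<phi> ` V \<subseteq> {0..<n}" using \<phi> unfolding I_def injs_def by (auto simp: PiE_def Pi_def)
      moreover have "\<forall>F\<in>edges Fl. \<phi> ` F \<in> edges G"
      proof
        fix F assume F: "F \<in> edges Fl"
        have "card F \<in> R" using F unfolding R_def edge_sizes_def by simp
        then have "\<phi> ` Ek (card F) \<in> Gk (card F)" using all by blast
        then show "\<phi> ` F \<in> edges G" using uniq[OF F] unfolding Gk_def by simp
      qed
      ultimately have "subgraph Fl G" unfolding subgraph_def V_def using vG by blast
      with nsG show False by blast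
    qed
  qed
  have "m \<le> card (\<Union>k\<in>R. I - Ak k)" unfolding m_def
    by (rule card_mono[OF _ cover]) (use fR fI in auto)
  also have "\<dots> \<le> (\<Sum>k\<in>R. card (I - Ak k))" by (rule card_UN_le[OF fR])
  also have "\<dots> = (\<Sum>k\<in>R. m - card (Ak k))"
    by (intro sum.cong refl) (auto simp: m_def Ak_def card_Diff_subset fI intro!: card_Diff_subset finite_subset[OF _ fI])
  finally have ineq: "real m \<le> (\<Sum>k\<in>R. real m - real (card (Ak k)))"
  proof -
    assume a: "m \<le> (\<Sum>k\<in>R. m - card (Ak k))"
    have "\<And>k. card (Ak k) \<le> m" unfolding m_def Ak_def by (rule card_mono[OF fI]) auto
    then have "real (\<Sum>k\<in>R. m - card (Ak k)) = (\<Sum>k\<in>R. real m - real (card (Ak k)))"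
      by (simp add: of_nat_diff)
    with a show ?thesis by (metis of_nat_le_iff)
  qed
  have h: "h_n n G = (\<Sum>k\<in>R. real (card (Gk k)) / real (n choose k))"
    unfolding Gk_def by (rule h_group) (use hg_finite_edges[OF hG] fR sG in \<open>auto simp: R_def edge_sizes_def\<close>)
  have "(\<Sum>k\<in>R. real m - real (card (Ak k))) = real (card R) * real m - real m * h_n n G"
    unfolding h by (simp add: sum_subtractf cnt sum_distrib_left field_simps)
  with ineq have "real m * h_n n G \<le> (real (card R) - 1) * real m" by (simp add: algebra_simps)
  then have "h_n n G * real m \<le> (real (card R) - 1) * real m" by (simp add: mult.commute)
  then show "h_n n G \<le> real (card (edge_sizes Fl)) - 1" using mpos unfolding R_def by simp
qed

lemma flag_degen:
  assumes hF: "hypergraph Fl" and fl: "flag Fl" and eF: "edges Fl \<noteq> {}"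
  shows "degenerate Fl"
proof -
  have "\<forall>\<^sub>F n in sequentially. pi_n Fl n = real (card (edge_sizes Fl)) - 1"
  proof (rule eventually_sequentiallyI[of "card (verts Fl)"])
    fix n assume n: "card (verts Fl) \<le> n"
    have "\<forall>k\<in>edge_sizes Fl. k \<le> n"
      using n hF unfolding edge_sizes_def hypergraph_def
      by (auto intro: order_trans[OF card_mono])
    then show "pi_n Fl n = real (card (edge_sizes Fl)) - 1"
      using pi_lower[OF hF eF] flag_pi[OF hF fl eF n] by (meson antisym)
  qed
  then show ?thesis unfolding degenerate_def by (rule tendsto_eventually)
qed

lemma edges_pair: "edges (A, B) = B" by (simp add: edges_def)
lemma verts_pair: "verts (A, B) = A" by (simp add: verts_def)

lemma supsets:
  assumes F: "F \<subseteq> X" and X: "finite X" and m: "card F \<le> m"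
  shows "card {S. S \<subseteq> X \<and> card S = m \<and> F \<subseteq> S} = (card X - card F) choose (m - card F)"
proof -
  let ?L = "{S. S \<subseteq> X \<and> card S = m \<and> F \<subseteq> S}"
  let ?T = "{T. T \<subseteq> X - F \<and> card T = m - card F}"
  have fF: "finite F" using F X finite_subset by auto
  have inj: "inj_on (\<lambda>S. S - F) ?L" by (rule inj_onI) auto
  have img: "(\<lambda>S. S - F) ` ?L = ?T"
  proof (intro set_eqI iffI)
    fix T assume "T \<in> (\<lambda>S. S - F) ` ?L"
    then obtain S where S: "S \<in> ?L" "T = S - F" by blast
    have "finite S" using S X finite_subset by auto
    then show "T \<in> ?T" using S fF by (auto simp: card_Diff_subset)
  next
    fix T assume T: "T \<in> ?T"
    have fT: "finite T" using T X finite_subset by auto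
    have "card (T \<union> F) = card T + card F" using T fT fF by (subst card_Un_disjoint) auto
    then have "T \<union> F \<in> ?L" using T F m by auto
    moreover have "T = (T \<union> F) - F" using T by auto
    ultimately show "T \<in> (\<lambda>S. S - F) ` ?L" by blast
  qed
  have "card ?L = card ?T" using card_image[OF inj] img by simp
  also have "\<dots> = card (X - F) choose (m - card F)" by (rule n_subsets) (use X in simp)
  also have "card (X - F) = card X - card F" using F fF by (simp add: card_Diff_subset)
  finally show ?thesis .
qed

lemma choose_ratio:
  assumes "k \<le> m" "m \<le> n"
  shows "real ((n - k) choose (m - k)) / real (m choose k) = real (n choose m) / real (n choose k)"
proof -
  have e: "real (n choose m) * real (m choose k) = real (n choose k) * real ((n - k) choose (m - k))"
    using choose_mult[OF assms] by (metis of_nat_mult)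
  have "real (m choose k) > 0" "real (n choose k) > 0" using assms by auto
  with e show ?thesis by (simp add: field_simps)
qed

lemma avg:
  assumes hG: "hypergraph G" and vG: "verts G = X" and cX: "card X = n" and mn: "m \<le> n"
    and sz: "\<forall>F\<in>edges G. card F \<le> m"
  shows "(\<Sum>S\<in>{S. S \<subseteq> X \<and> card S = m}. h_n m (S, {F\<in>edges G. F \<subseteq> S})) = real (n choose m) * h_n n G"
proof -
  let ?M = "{S. S \<subseteq> X \<and> card S = m}"
  have fX: "finite X" using hG vG unfolding hypergraph_def by blast
  have fM: "finite ?M" using fX by simp
  have fE: "finite (edges G)" using hg_finite_edges[OF hG] .
  have "(\<Sum>S\<in>?M. h_n m (S, {F\<in>edges G. F \<subseteq> S}))
      = (\<Sum>S\<in>?M. \<Sum>F\<in>edges G. if F \<subseteq> S then 1 / real (m choose card F) else 0)"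
    unfolding h_n_def by (simp only: edges_pair sum.inter_filter[OF fE])
  also have "\<dots> = (\<Sum>F\<in>edges G. \<Sum>S\<in>?M. if F \<subseteq> S then 1 / real (m choose card F) else 0)"
    by (rule sum.swap)
  also have "\<dots> = (\<Sum>F\<in>edges G. real (n choose m) / real (n choose card F))"
  proof (intro sum.cong refl)
    fix F assume F: "F \<in> edges G"
    have FX: "F \<subseteq> X" using hg_edge_sub[OF hG F] vG by simp
    have km: "card F \<le> m" using sz F by blast
    have "(\<Sum>S\<in>?M. if F \<subseteq> S then 1 / real (m choose card F) else 0)
        = (\<Sum>S\<in>{S\<in>?M. F \<subseteq> S}. 1 / real (m choose card F))"
      unfolding sum.inter_filter[OF fM] by (rule refl)
    also have "\<dots> = real (card {S\<in>?M. F \<subseteq> S}) / real (m choose card F)" by simp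
    finally have e1: "(\<Sum>S\<in>?M. if F \<subseteq> S then 1 / real (m choose card F) else 0)
        = real (card {S\<in>?M. F \<subseteq> S}) / real (m choose card F)" .
    have "{S\<in>?M. F \<subseteq> S} = {S. S \<subseteq> X \<and> card S = m \<and> F \<subseteq> S}" by auto
    then have e2: "card {S\<in>?M. F \<subseteq> S} = (n - card F) choose (m - card F)" using supsets[OF FX fX km] cX by simp
    show "(\<Sum>S\<in>?M. if F \<subseteq> S then 1 / real (m choose card F) else 0)
        = real (n choose m) / real (n choose card F)"
      unfolding e1 e2      using choose_ratio[OF km mn] by simp
  qed
  also have "\<dots> = real (n choose m) * h_n n G"
    unfolding h_n_def by (simp add: sum_distrib_left)
  finally show ?thesis .
qed

lemma relabel:
  assumes hH: "hypergraph H" and eH: "edges H \<noteq> {}" and hG: "hypergraph G'" and cG: "card (verts G') = m"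
    and sG: "edge_sizes G' \<subseteq> edge_sizes H" and ns: "\<not> subgraph H G'"
  shows "h_n m (G' :: nat hg) \<le> pi_n H m"
proof -
  have fV: "finite (verts G')" using hG unfolding hypergraph_def by blast
  obtain \<beta> where \<beta>: "bij_betw \<beta> {0..<m} (verts G')" using ex_bij_betw_nat_finite[OF fV] cG by blast
  define \<alpha> where "\<alpha> = inv_into {0..<m} \<beta>"
  have \<alpha>: "bij_betw \<alpha> (verts G') {0..<m}" unfolding \<alpha>_def by (rule bij_betw_inv_into[OF \<beta>])
  have ba: "\<beta> (\<alpha> u) = u" if "u \<in> verts G'" for u
    using \<beta> that unfolding \<alpha>_def by (simp add: bij_betw_inv_into_right)
  define G'' :: "nat hg" where "G'' = ({0..<m}, image \<alpha> ` edges G')"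
  have EP: "edges G' \<subseteq> Pow (verts G')" using hG unfolding hypergraph_def by blast
  have injE: "inj_on (image \<alpha>) (edges G')"
    by (rule inj_on_subset[OF inj_on_image_Pow[OF bij_betw_imp_inj_on[OF \<alpha>]] EP])
  have cardF: "card (\<alpha> ` F) = card F" if "F \<in> edges G'" for F
    by (rule card_image[OF inj_on_subset[OF bij_betw_imp_inj_on[OF \<alpha>] hg_edge_sub[OF hG that]]])
  have "\<alpha> ` F \<subseteq> {0..<m}" if "F \<in> edges G'" for F
    using hg_edge_sub[OF hG that] \<alpha> by (auto simp: bij_betw_def)
  then have hG'': "hypergraph G''" unfolding G''_def hypergraph_def verts_pair edges_pair
    by auto
  have vG'': "verts G'' = {0..<m}" unfolding G''_def verts_def by simp
  have sG'': "edge_sizes G'' \<subseteq> edge_sizes H"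
    using sG cardF unfolding G''_def edge_sizes_def edges_pair by auto
  have "h_n m G'' = (\<Sum>F\<in>image \<alpha> ` edges G'. 1 / real (m choose card F))"
    unfolding G''_def h_n_def edges_pair by (rule refl)
  also have "\<dots> = (\<Sum>F\<in>edges G'. 1 / real (m choose card (\<alpha> ` F)))"
    by (rule sum.reindex[OF injE, unfolded comp_def])
  also have "\<dots> = (\<Sum>F\<in>edges G'. 1 / real (m choose card F))"
    by (rule sum.cong[OF refl]) (simp add: cardF)
  finally have hh: "h_n m G'' = h_n m G'" unfolding h_n_def .
  have ns'': "\<not> subgraph H G''"
  proof
    assume "subgraph H G''"
    then obtain f where f: "inj_on f (verts H)" "f ` verts H \<subseteq> {0..<m}" "\<forall>F\<in>edges H. f ` F \<in> image \<alpha> ` edges G'"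
      unfolding subgraph_def G''_def verts_pair edges_pair by auto
    have "inj_on (\<beta> \<circ> f) (verts H)" using f(1,2) \<beta>
      by (intro comp_inj_on) (auto simp: bij_betw_def intro: inj_on_subset)
    moreover have "(\<beta> \<circ> f) ` verts H \<subseteq> verts G'" using f(2) \<beta> by (auto simp: bij_betw_def)
    moreover have "\<forall>F\<in>edges H. (\<beta> \<circ> f) ` F \<in> edges G'"
    proof
      fix F assume F: "F \<in> edges H"
      have "f ` F \<in> image \<alpha> ` edges G'" using f(3) F by (rule bspec)
      then obtain F' where F': "F' \<in> edges G'" "f ` F = \<alpha> ` F'" by (rule imageE) (rule that, assumption, simp)
      have sub: "F' \<subseteq> verts G'" using hg_edge_sub[OF hG F'(1)] .
      have "\<beta> ` (\<alpha> ` F') = F'"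
      proof (intro set_eqI iffI)
        fix u assume "u \<in> \<beta> ` (\<alpha> ` F')"
        then obtain w where "w \<in> F'" "u = \<beta> (\<alpha> w)" by blast
        then show "u \<in> F'" using ba sub by auto
      next
        fix u assume "u \<in> F'"
        then have "\<beta> (\<alpha> u) = u" using ba sub by auto
        then show "u \<in> \<beta> ` (\<alpha> ` F')" using \<open>u \<in> F'\<close> by (metis imageI)
      qed
      then have "\<beta> ` (f ` F) \<in> edges G'" using F' by simp
      then show "(\<beta> \<circ> f) ` F \<in> edges G'" by (simp only: image_comp)
    qed
    ultimately have "subgraph H G'" unfolding subgraph_def by blast
    with ns show False by blast
  qed
  show ?thesis using pi_upper[OF hH hG'' vG'' sG'' ns''] hh by simp
qed

definition dup :: "'a hg \<Rightarrow> 'a \<Rightarrow> 'a \<Rightarrow> 'a hg" where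
  "dup H x y = (insert y (verts H), edges H \<union> {insert y (F - {x}) | F. F \<in> edges H \<and> x \<in> F})"

lemma dup_verts: "verts (dup H x y) = insert y (verts H)" unfolding dup_def by (simp add: verts_pair)
lemma dup_edges: "edges (dup H x y) = edges H \<union> {insert y (F - {x}) | F. F \<in> edges H \<and> x \<in> F}"
  unfolding dup_def by (simp add: edges_pair)

lemma dup_hg: assumes "hypergraph H" shows "hypergraph (dup H x y)"
  using assms unfolding hypergraph_def dup_verts dup_edges by auto

lemma dup_sizes:
  assumes hH: "hypergraph H" and yV: "y \<notin> verts H"
  shows "edge_sizes (dup H x y) = edge_sizes H"
proof -
  have "card (insert y (F - {x})) = card F" if F: "F \<in> edges H" "x \<in> F" for F
  proof -
    have fF: "finite F" using hg_edge_sub[OF hH F(1)] hH unfolding hypergraph_def by (meson finite_subset)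
    have "y \<notin> F" using hg_edge_sub[OF hH F(1)] yV by blast
    then have "card (insert y (F - {x})) = Suc (card (F - {x}))" using fF by (simp add: card_insert_disjoint)
    moreover have "card (F - {x}) = card F - 1" using fF F(2) by (simp add: card_Diff_singleton)
    moreover have "card F > 0" using fF F(2) card_gt_0_iff by blast
    ultimately show ?thesis by simp
  qed
  then show ?thesis unfolding edge_sizes_def dup_edges by auto
qed

lemma good_bound:
  fixes G :: "nat hg" and H :: "'a hg"
  assumes hH: "hypergraph H" and eH: "edges H \<noteq> {}" and d0: "0 \<le> \<delta>"
    and mR: "\<forall>k\<in>edge_sizes H. k \<le> m" and piH: "pi_n H m \<le> real (card (edge_sizes H)) - 1 + \<delta>"
    and mn: "m \<le> n"
    and hG: "hypergraph G" and vG: "verts G = {0..<n}" and sG: "edge_sizes G \<subseteq> edge_sizes H"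
    and big: "h_n n G > real (card (edge_sizes H)) - 1 + 2 * \<delta>"
  shows "\<delta> * real (n choose m) < real (card {S. S \<subseteq> {0..<n} \<and> card S = m \<and> subgraph H (S, {F\<in>edges G. F \<subseteq> S})})"
proof -
  define r where "r = real (card (edge_sizes H))"
  define M where "M = {S. S \<subseteq> {0..<n} \<and> card S = m}"
  define GS where "GS S = (S, {F\<in>edges G. F \<subseteq> S})" for S :: "nat set"
  define Good where "Good = {S\<in>M. subgraph H (GS S)}"
  have fM: "finite M" unfolding M_def by simp
  have GoodM: "Good \<subseteq> M" unfolding Good_def by blast
  have fGood: "finite Good" using finite_subset[OF GoodM fM] .
  have cM: "card M = n choose m" unfolding M_def using n_subsets[of "{0..<n}" m] by simp
  have cpos: "real (n choose m) > 0" using mn by simp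
  have avg: "(\<Sum>S\<in>M. h_n m (GS S)) = real (n choose m) * h_n n G"
    unfolding M_def GS_def
  proof (rule avg[OF hG vG _ mn])
    show "card {0..<n} = n" by simp
    show "\<forall>F\<in>edges G. card F \<le> m" using sG mR unfolding edge_sizes_def by auto
  qed
  have hGS: "hypergraph (GS S)" if "S \<in> M" for S
    using that unfolding GS_def M_def hypergraph_def verts_pair edges_pair
    by (auto intro: finite_subset)
  have cGS: "card (verts (GS S)) = m" if "S \<in> M" for S using that unfolding GS_def M_def verts_pair by simp
  have sGS: "edge_sizes (GS S) \<subseteq> edge_sizes H" for S
    using sG unfolding GS_def edge_sizes_def edges_pair by auto
  have ub: "h_n m (GS S) \<le> r" if "S \<in> M" for S
  proof -
    have "h_n m (GS S) \<le> card (edge_sizes (GS S))" using h_bound[OF hGS[OF that] cGS[OF that]] .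
    also have "\<dots> \<le> r" unfolding r_def using sGS[of S] hg_finite_sizes[OF hH] by (simp add: card_mono)
    finally show ?thesis .
  qed
  have ub2: "h_n m (GS S) \<le> r - 1 + \<delta>" if "S \<in> M - Good" for S
  proof -
    have "S \<in> M" "\<not> subgraph H (GS S)" using that unfolding Good_def by auto
    then have "h_n m (GS S) \<le> pi_n H m" using relabel[OF hH eH hGS cGS sGS] by blast
    then show ?thesis using piH unfolding r_def by simp
  qed
  have "(\<Sum>S\<in>M. h_n m (GS S)) = (\<Sum>S\<in>Good. h_n m (GS S)) + (\<Sum>S\<in>M - Good. h_n m (GS S))"
    using sum.subset_diff[OF GoodM fM] by (simp add: add.commute)
  also have "\<dots> \<le> (\<Sum>S\<in>Good. r) + (\<Sum>S\<in>M - Good. r - 1 + \<delta>)"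
    by (intro add_mono sum_mono) (use ub ub2 GoodM in auto)
  also have "\<dots> = real (card Good) * r + (real (n choose m) - real (card Good)) * (r - 1 + \<delta>)"
    using card_Diff_subset[OF fGood GoodM] card_mono[OF fM GoodM] cM by (simp add: of_nat_diff)
  finally have "real (n choose m) * h_n n G \<le> real (card Good) * r + (real (n choose m) - real (card Good)) * (r - 1 + \<delta>)"
    using avg by simp
  moreover have "real (n choose m) * (r - 1 + 2 * \<delta>) < real (n choose m) * h_n n G"
    using big cpos unfolding r_def by simp
  ultimately have "real (n choose m) * \<delta> < real (card Good) * (1 - \<delta>)" by (simp add: algebra_simps)
  also have "\<dots> \<le> real (card Good)" using d0 by (simp add: mult_left_le)
  finally show ?thesis unfolding Good_def M_def GS_def by (simp add: mult.commute)
qed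

lemma cop_bound:
  fixes G :: "nat hg" and H :: "'a hg"
  assumes hH: "hypergraph H" and vm: "card (verts H) \<le> m" and mn: "m \<le> n"
  shows "card {S. S \<subseteq> {0..<n} \<and> card S = m \<and> subgraph H (S, {F\<in>edges G. F \<subseteq> S})}
     \<le> card {\<phi>\<in>injs (verts H) n. \<forall>F\<in>edges H. \<phi> ` F \<in> edges G} * ((n - card (verts H)) choose (m - card (verts H)))"
proof -
  define V where "V = verts H"
  define Cop where "Cop = {\<phi>\<in>injs V n. \<forall>F\<in>edges H. \<phi> ` F \<in> edges G}"
  define Good where "Good = {S. S \<subseteq> {0..<n} \<and> card S = m \<and> subgraph H (S, {F\<in>edges G. F \<subseteq> S})}"
  have fV: "finite V" using hH unfolding V_def hypergraph_def by blast
  have fCop: "finite Cop" unfolding Cop_def using finite_injs[OF fV] by simp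
  have cover: "Good \<subseteq> (\<Union>\<phi>\<in>Cop. {S. S \<subseteq> {0..<n} \<and> card S = m \<and> \<phi> ` V \<subseteq> S})"
  proof
    fix S assume S: "S \<in> Good"
    then obtain f where f: "inj_on f V" "f ` V \<subseteq> S" "\<forall>F\<in>edges H. f ` F \<in> {F\<in>edges G. F \<subseteq> S}"
      unfolding Good_def subgraph_def V_def verts_pair edges_pair by blast
    have Sn: "S \<subseteq> {0..<n}" "card S = m" using S unfolding Good_def by auto
    define \<phi> where "\<phi> = restrict f V"
    have img: "\<phi> ` F = f ` F" if "F \<subseteq> V" for F using that unfolding \<phi>_def by auto
    have "\<phi> \<in> PiE V (\<lambda>_. {0..<n})" unfolding \<phi>_def using f(2) Sn(1) by auto
    moreover have "inj_on \<phi> V" using f(1) unfolding \<phi>_def inj_on_def by auto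
    moreover have "\<forall>F\<in>edges H. \<phi> ` F \<in> edges G"
      using f(3) img hg_edge_sub[OF hH] unfolding V_def by auto
    ultimately have "\<phi> \<in> Cop" unfolding Cop_def injs_def by blast
    moreover have "\<phi> ` V \<subseteq> S" using img[of V] f(2) by simp
    ultimately show "S \<in> (\<Union>\<phi>\<in>Cop. {S. S \<subseteq> {0..<n} \<and> card S = m \<and> \<phi> ` V \<subseteq> S})" using Sn by blast
  qed
  have "card Good \<le> card (\<Union>\<phi>\<in>Cop. {S. S \<subseteq> {0..<n} \<and> card S = m \<and> \<phi> ` V \<subseteq> S})"
    by (rule card_mono[OF _ cover]) (use fCop in auto)
  also have "\<dots> \<le> (\<Sum>\<phi>\<in>Cop. card {S. S \<subseteq> {0..<n} \<and> card S = m \<and> \<phi> ` V \<subseteq> S})"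
    by (rule card_UN_le[OF fCop])
  also have "\<dots> = (\<Sum>\<phi>\<in>Cop. (n - card V) choose (m - card V))"
  proof (intro sum.cong refl)
    fix \<phi> assume "\<phi> \<in> Cop"
    then have \<phi>: "\<phi> \<in> PiE V (\<lambda>_. {0..<n})" "inj_on \<phi> V" unfolding Cop_def injs_def by auto
    have sub: "\<phi> ` V \<subseteq> {0..<n}" using \<phi>(1) by (auto simp: PiE_def Pi_def)
    have c: "card (\<phi> ` V) = card V" using card_image[OF \<phi>(2)] .
    show "card {S. S \<subseteq> {0..<n} \<and> card S = m \<and> \<phi> ` V \<subseteq> S} = (n - card V) choose (m - card V)"
      using supsets[OF sub _, of m] c vm unfolding V_def by simp
  qed
  also have "\<dots> = card Cop * ((n - card V) choose (m - card V))" by simp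
  finally show ?thesis unfolding Good_def Cop_def V_def .
qed

lemma pigeon:
  fixes G :: "nat hg" and H :: "'a hg"
  assumes hH: "hypergraph H" and xV: "x \<in> verts H" and yV: "y \<notin> verts H" and vG: "verts G = {0..<n}"
    and many: "card {\<phi>\<in>injs (verts H) n. \<forall>F\<in>edges H. \<phi> ` F \<in> edges G} > n ^ (card (verts H) - 1)"
  shows "subgraph (dup H x y) G"
proof -
  define V where "V = verts H"
  define W where "W = V - {x}"
  define Cop where "Cop = {\<phi>\<in>injs V n. \<forall>F\<in>edges H. \<phi> ` F \<in> edges G}"
  have fV: "finite V" using hH unfolding V_def hypergraph_def by blast
  have fCop: "finite Cop" unfolding Cop_def using finite_injs[OF fV] by simp
  define \<rho> where "\<rho> \<phi> = restrict \<phi> W" for \<phi> :: "'a \<Rightarrow> nat"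
  have "\<not> inj_on \<rho> Cop"
  proof
    assume inj: "inj_on \<rho> Cop"
    have "\<rho> \<phi> \<in> PiE W (\<lambda>_. {0..<n})" if "\<phi> \<in> Cop" for \<phi>
    proof -
      have "\<phi> \<in> PiE V (\<lambda>_. {0..<n})" using that unfolding Cop_def injs_def by blast
      then have "\<forall>u\<in>W. \<phi> u \<in> {0..<n}" unfolding W_def by blast
      then show ?thesis unfolding \<rho>_def by simp
    qed
    then have "\<rho> ` Cop \<subseteq> PiE W (\<lambda>_. {0..<n})" by blast
    moreover have "finite (PiE W (\<lambda>_. {0..<n}))" using fV unfolding W_def by (intro finite_PiE) auto
    ultimately have "card (\<rho> ` Cop) \<le> card (PiE W (\<lambda>_. {0..<n}))"
      by (intro card_mono)
    also have "\<dots> = n ^ card W" using fV by (simp add: card_PiE W_def)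
    also have "card W = card V - 1" unfolding W_def using xV fV V_def by (simp add: card_Diff_singleton)
    finally have "card Cop \<le> n ^ (card V - 1)" using card_image[OF inj] by simp
    with many show False unfolding Cop_def V_def by simp
  qed
  then obtain \<phi>1 \<phi>2 where p: "\<phi>1 \<in> Cop" "\<phi>2 \<in> Cop" "\<phi>1 \<noteq> \<phi>2" "\<rho> \<phi>1 = \<rho> \<phi>2"
    unfolding inj_on_def by blast
  have p1: "\<phi>1 \<in> PiE V (\<lambda>_. {0..<n})" "inj_on \<phi>1 V" "\<forall>F\<in>edges H. \<phi>1 ` F \<in> edges G"
    using p(1) unfolding Cop_def injs_def by auto
  have p2: "\<phi>2 \<in> PiE V (\<lambda>_. {0..<n})" "inj_on \<phi>2 V" "\<forall>F\<in>edges H. \<phi>2 ` F \<in> edges G"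
    using p(2) unfolding Cop_def injs_def by auto
  have agree: "\<phi>1 u = \<phi>2 u" if "u \<in> W" for u
    using fun_cong[OF p(4), of u] that unfolding \<rho>_def by simp
  have xV': "x \<in> V" using xV unfolding V_def .
  have diff: "\<phi>1 x \<noteq> \<phi>2 x"
  proof
    assume e: "\<phi>1 x = \<phi>2 x"
    have "\<phi>1 = \<phi>2"
    proof
      fix u show "\<phi>1 u = \<phi>2 u"
      proof (cases "u \<in> V")
        case True then show ?thesis using agree e unfolding W_def by (cases "u = x") auto
      next
        case False then show ?thesis using p1(1) p2(1) by (auto simp: PiE_def extensional_def)
      qed
    qed
    with p(3) show False by blast
  qed
  define f where "f u = (if u = y then \<phi>2 x else \<phi>1 u)" for u
  have yV': "y \<notin> V" using yV unfolding V_def .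
  have fV1: "f u = \<phi>1 u" if "u \<in> V" for u using that yV' unfolding f_def by auto
  have imgF: "f ` F = \<phi>1 ` F" if "F \<subseteq> V" for F using fV1 that by (auto simp: image_def subset_iff)
  have "inj_on f (insert y V)"
  proof (subst inj_on_insert, intro conjI)
    show "inj_on f V" using p1(2) by (rule inj_on_cong[THEN iffD1, rotated]) (simp add: fV1)
    show "f y \<notin> f ` (V - {y})"
    proof
      assume "f y \<in> f ` (V - {y})"
      then obtain u where u0: "u \<in> V - {y}" "f y = f u" by blast
      have fy: "f y = \<phi>2 x" unfolding f_def by simp
      have u: "u \<in> V" "\<phi>2 x = \<phi>1 u" using u0 fV1[of u] fy by auto
      show False
      proof (cases "u = x")
        case True then show False using u diff by simp
      next
        case False
        then have "\<phi>2 x = \<phi>2 u" using u agree unfolding W_def by auto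
        then show False using inj_onD[OF p2(2)] False u xV' by blast
      qed
    qed
  qed
  moreover have "f ` insert y V \<subseteq> {0..<n}"
  proof -
    have "f y \<in> {0..<n}" using p2(1) xV' unfolding f_def by auto
    moreover have "f ` V \<subseteq> {0..<n}" using imgF[of V] p1(1) by auto
    ultimately show ?thesis by simp
  qed
  moreover have "\<forall>F\<in>edges (dup H x y). f ` F \<in> edges G"
  proof
    fix E assume "E \<in> edges (dup H x y)"
    then consider (old) "E \<in> edges H" | (new) F where "F \<in> edges H" "x \<in> F" "E = insert y (F - {x})"
      unfolding dup_edges by blast
    then show "f ` E \<in> edges G"
    proof cases
      case old
      then show ?thesis using imgF[OF hg_edge_sub[OF hH old, folded V_def]] p1(3) by simp
    next
      case (new F)
      have FV: "F \<subseteq> V" using hg_edge_sub[OF hH new(1)] unfolding V_def .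
      have fy: "f y = \<phi>2 x" unfolding f_def by simp
      have "f ` E = insert (f y) (f ` (F - {x}))" using new(3) by simp
      also have "f ` (F - {x}) = \<phi>1 ` (F - {x})" using imgF[of "F - {x}"] FV by blast
      finally have "f ` E = insert (\<phi>2 x) (\<phi>1 ` (F - {x}))" using fy by simp
      also have "\<phi>1 ` (F - {x}) = \<phi>2 ` (F - {x})" using agree FV unfolding W_def
        by (intro image_cong refl) auto
      also have "insert (\<phi>2 x) (\<phi>2 ` (F - {x})) = \<phi>2 ` F" using new(2) by blast
      finally show ?thesis using p2(3) new(1) by simp
    qed
  qed
  ultimately show ?thesis unfolding subgraph_def dup_verts V_def[symmetric] vG
    by (intro exI[of _ f] conjI)
qed

lemma dup_core:
  fixes G :: "nat hg" and H :: "'a hg"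
  assumes hH: "hypergraph H" and eH: "edges H \<noteq> {}" and xV: "x \<in> verts H" and yV: "y \<notin> verts H"
    and d0: "0 < \<delta>" and vm: "card (verts H) \<le> m" and mR: "\<forall>k\<in>edge_sizes H. k \<le> m"
    and piH: "pi_n H m \<le> real (card (edge_sizes H)) - 1 + \<delta>" and mn: "m \<le> n"
    and big: "real (card (verts H)) ^ card (verts H) * real (m choose card (verts H)) \<le> \<delta> * real n"
    and hG: "hypergraph G" and vG: "verts G = {0..<n}" and sG: "edge_sizes G \<subseteq> edge_sizes H"
    and ns: "\<not> subgraph (dup H x y) G"
  shows "h_n n G \<le> real (card (edge_sizes H)) - 1 + 2 * \<delta>"
proof (rule ccontr)
  assume "\<not> ?thesis"
  then have bigh: "h_n n G > real (card (edge_sizes H)) - 1 + 2 * \<delta>" by simp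
  define v where "v = card (verts H)"
  define Good where "Good = card {S. S \<subseteq> {0..<n} \<and> card S = m \<and> subgraph H (S, {F\<in>edges G. F \<subseteq> S})}"
  define Cop where "Cop = card {\<phi>\<in>injs (verts H) n. \<forall>F\<in>edges H. \<phi> ` F \<in> edges G}"
  have fV: "finite (verts H)" using hH unfolding hypergraph_def by blast
  have v1: "v \<ge> 1" unfolding v_def using xV fV by (metis One_nat_def Suc_leI card_gt_0_iff empty_iff)
  have vn: "v \<le> n" using vm mn unfolding v_def by simp
  have g1: "\<delta> * real (n choose m) < real Good"
    unfolding Good_def using good_bound[OF hH eH _ mR piH mn hG vG sG bigh] d0 by simp
  have g2: "Good \<le> Cop * ((n - v) choose (m - v))"
    unfolding Good_def Cop_def v_def by (rule cop_bound[OF hH vm mn])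
  have r: "real ((n - v) choose (m - v)) = real (n choose m) * real (m choose v) / real (n choose v)"
  proof -
    have "real ((n - v) choose (m - v)) / real (m choose v) = real (n choose m) / real (n choose v)"
      using choose_ratio[of v m n] vm mn unfolding v_def by simp
    moreover have "real (m choose v) > 0" using vm unfolding v_def by simp
    ultimately show ?thesis by (simp add: field_simps)
  qed
  have cnm: "real (n choose m) > 0" "real (n choose v) > 0" "real (m choose v) > 0"
    using mn vm vn unfolding v_def by auto
  have "\<delta> * real (n choose m) < real Cop * real ((n - v) choose (m - v))"
    using g1 g2 by (metis of_nat_le_iff of_nat_mult order_less_le_trans)
  then have "\<delta> * real (n choose m) < real Cop * (real (n choose m) * real (m choose v) / real (n choose v))"
    using r by simp
  then have "\<delta> * real (n choose m) * real (n choose v) < real Cop * real (m choose v) * real (n choose m)"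
    using cnm by (simp add: field_simps)
  then have c1: "\<delta> * real (n choose v) < real Cop * real (m choose v)"
    using cnm by (simp add: mult.commute mult.left_commute)
  have "(real n / real v) ^ v \<le> real (n choose v)" using binomial_ge_n_over_k_pow_k[OF vn] by simp
  then have c2: "\<delta> * (real n / real v) ^ v \<le> \<delta> * real (n choose v)" using d0 by simp
  have c3: "real n ^ (v - 1) * real (m choose v) \<le> \<delta> * (real n / real v) ^ v"
  proof -
    have vp: "real v ^ v > 0" using v1 by simp
    have e: "real n ^ v = real n * real n ^ (v - 1)" using v1 by (metis One_nat_def Suc_diff_le diff_Suc_1 power_Suc)
    have "real v ^ v * real (m choose v) * real n ^ (v - 1) \<le> \<delta> * real n * real n ^ (v - 1)"
      using big unfolding v_def[symmetric] by (intro mult_right_mono) auto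
    then have "real n ^ (v - 1) * real (m choose v) * real v ^ v \<le> \<delta> * real n ^ v"
      using e by (simp add: algebra_simps)
    then show ?thesis using vp by (simp add: power_divide field_simps)
  qed
  have "real n ^ (v - 1) * real (m choose v) < real Cop * real (m choose v)"
    using c1 c2 c3 by linarith
  then have "real n ^ (v - 1) < real Cop" using cnm by simp
  then have "n ^ (card (verts H) - 1) < Cop" unfolding v_def by (metis of_nat_less_iff of_nat_power)
  then have "subgraph (dup H x y) G" unfolding Cop_def by (rule pigeon[OF hH xV yV vG])
  with ns show False by blast
qed

lemma dup_degen:
  fixes H :: "'a hg"
  assumes hH: "hypergraph H" and eH: "edges H \<noteq> {}" and dH: "degenerate H"
    and xV: "x \<in> verts H" and yV: "y \<notin> verts H"
  shows "degenerate (dup H x y)"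
proof -
  let ?D = "dup H x y"
  let ?r = "real (card (edge_sizes H))"
  have hD: "hypergraph ?D" by (rule dup_hg[OF hH])
  have sD: "edge_sizes ?D = edge_sizes H" by (rule dup_sizes[OF hH yV])
  have eD: "edges ?D \<noteq> {}" using eH unfolding dup_edges by blast
  obtain N1 where N1: "\<forall>n\<ge>N1. \<forall>k\<in>edge_sizes H. k \<le> n" using sizes_bounded[OF hg_finite_sizes[OF hH]] by blast
  show ?thesis unfolding degenerate_def sD
  proof (rule LIMSEQ_I)
    fix \<epsilon> :: real assume e: "0 < \<epsilon>"
    define \<delta> where "\<delta> = \<epsilon> / 4"
    have d0: "0 < \<delta>" using e unfolding \<delta>_def by simp
    obtain m0 where m0: "\<forall>m\<ge>m0. norm (pi_n H m - (?r - 1)) < \<delta>"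
      using dH d0 unfolding degenerate_def by (meson LIMSEQ_D)
    define m where "m = max m0 (max (card (verts H)) N1)"
    have piH: "pi_n H m \<le> ?r - 1 + \<delta>" using m0[rule_format, of m] unfolding m_def by auto
    have vm: "card (verts H) \<le> m" unfolding m_def by simp
    have mR: "\<forall>k\<in>edge_sizes H. k \<le> m" using N1 unfolding m_def by auto
    obtain N2 :: nat where N2: "real (card (verts H)) ^ card (verts H) * real (m choose card (verts H)) / \<delta> < real N2"
      using reals_Archimedean2 by blast
    show "\<exists>no. \<forall>n\<ge>no. norm (pi_n ?D n - (?r - 1)) < \<epsilon>"
    proof (intro exI allI impI)
      fix n assume n: "max m N2 \<le> n"
      have mn: "m \<le> n" using n by simp
      have big: "real (card (verts H)) ^ card (verts H) * real (m choose card (verts H)) \<le> \<delta> * real n"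
      proof -
        have "real N2 \<le> real n" using n by simp
        then have a: "\<delta> * real N2 \<le> \<delta> * real n" using d0 by simp
        have "real (card (verts H)) ^ card (verts H) * real (m choose card (verts H)) < \<delta> * real N2"
          using N2 d0 by (simp add: field_simps)
        then show ?thesis using a by linarith
      qed
      have up: "pi_n ?D n \<le> ?r - 1 + 2 * \<delta>"
      proof (rule pi_least[OF eD])
        fix G :: "nat hg" assume "hypergraph G" "verts G = {0..<n}" "edge_sizes G \<subseteq> edge_sizes ?D"
          "\<not> subgraph ?D G"
        then show "h_n n G \<le> ?r - 1 + 2 * \<delta>"
          using dup_core[OF hH eH xV yV d0 vm mR piH mn big] sD by auto
      qed
      have "\<forall>k\<in>edge_sizes ?D. k \<le> n" using sD mR mn by auto
      then have lo: "?r - 1 \<le> pi_n ?D n"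
        using pi_lower[OF hD eD] sD by simp
      show "norm (pi_n ?D n - (?r - 1)) < \<epsilon>" using up lo d0 unfolding \<delta>_def by simp
    qed
  qed
qed

lemma blowup_verts: "verts (blowup H s) = {(v, j). v \<in> verts H \<and> j < s v}"
  unfolding blowup_def by (simp add: verts_pair)
lemma blowup_edges: "edges (blowup H s) = {(\<lambda>v. (v, g v)) ` F | F g. F \<in> edges H \<and> (\<forall>v\<in>F. g v < s v)}"
  unfolding blowup_def by (simp add: edges_pair)

lemma blowup_hg:
  assumes hH: "hypergraph H" shows "hypergraph (blowup H s)"
proof -
  have "{(v, j). v \<in> verts H \<and> j < s v} = Sigma (verts H) (\<lambda>v. {0..<s v})" by auto
  moreover have "finite (verts H)" using hH unfolding hypergraph_def by blast
  ultimately have f: "finite (verts (blowup H s))" unfolding blowup_verts by simp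
  have "edges (blowup H s) \<subseteq> Pow (verts (blowup H s))"
    unfolding blowup_edges blowup_verts using hg_edge_sub[OF hH] by blast
  with f show ?thesis unfolding hypergraph_def by blast
qed

lemma blowup_edges_ne:
  assumes "edges H \<noteq> {}" "\<forall>v\<in>verts H. 0 < s v" "hypergraph H"
  shows "edges (blowup H s) \<noteq> {}"
proof -
  obtain F where F: "F \<in> edges H" using assms(1) by blast
  have "\<forall>v\<in>F. (\<lambda>_. 0::nat) v < s v" using assms(2) hg_edge_sub[OF assms(3) F] by auto
  then have "\<exists>F' g. (\<lambda>v. (v, 0::nat)) ` F = (\<lambda>v. (v, g v)) ` F' \<and> F' \<in> edges H \<and> (\<forall>v\<in>F'. g v < s v)"
    using F by (intro exI[of _ F] exI[of _ "\<lambda>_. 0::nat"]) auto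
  then have "(\<lambda>v. (v, 0::nat)) ` F \<in> edges (blowup H s)" unfolding blowup_edges by simp
  then show ?thesis by blast
qed

lemma blowup_sub_base:
  assumes hH: "hypergraph H" and s1: "\<forall>v\<in>verts H. s v \<le> 1" shows "subgraph (blowup H s) H"
proof -
  have "inj_on fst (verts (blowup H s))" "fst ` verts (blowup H s) \<subseteq> verts H"
    unfolding blowup_verts using s1 by (auto simp: inj_on_def)
  moreover have "\<forall>E\<in>edges (blowup H s). fst ` E \<in> edges H"
  proof
    fix E assume "E \<in> edges (blowup H s)"
    then obtain F g where "E = (\<lambda>v. (v, g v)) ` F" "F \<in> edges H" unfolding blowup_edges by blast
    then show "fst ` E \<in> edges H" by (simp add: image_image)
  qed
  ultimately show ?thesis unfolding subgraph_def by blast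
qed

lemma blowup_step:
  assumes a: "a \<in> verts H" and sa: "2 \<le> s a"
  defines "s' \<equiv> s(a := s a - 1)"
  shows "subgraph (blowup H s) (dup (blowup H s') (a, 0) (a, s a - 1))"
proof -
  have "inj_on id (verts (blowup H s))" by simp
  moreover have "id ` verts (blowup H s) \<subseteq> verts (dup (blowup H s') (a, 0) (a, s a - 1))"
    unfolding dup_verts blowup_verts s'_def by auto
  moreover have "\<forall>E\<in>edges (blowup H s). id ` E \<in> edges (dup (blowup H s') (a, 0) (a, s a - 1))"
  proof
    fix E assume "E \<in> edges (blowup H s)"
    then obtain F g where E: "E = (\<lambda>v. (v, g v)) ` F" "F \<in> edges H" "\<forall>v\<in>F. g v < s v"
      unfolding blowup_edges by blast
    show "id ` E \<in> edges (dup (blowup H s') (a, 0) (a, s a - 1))"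
    proof (cases "a \<in> F \<and> g a = s a - 1")
      case False
      then have "\<forall>v\<in>F. g v < s' v" using E(3) unfolding s'_def by auto
      then have "E \<in> edges (blowup H s')" unfolding blowup_edges using E(1,2) by blast
      then show ?thesis unfolding dup_edges by simp
    next
      case True
      define g' where "g' = g(a := 0)"
      define E0 where "E0 = (\<lambda>v. (v, g' v)) ` F"
      have "\<forall>v\<in>F. g' v < s' v" using E(3) sa unfolding s'_def g'_def by auto
      then have E0: "E0 \<in> edges (blowup H s')" unfolding blowup_edges E0_def using E(2) by blast
      have a0: "(a, 0) \<in> E0" using True unfolding E0_def g'_def by force
      have "E = insert (a, s a - 1) (E0 - {(a, 0)})"
      proof (intro set_eqI iffI)
        fix p assume "p \<in> E"
        then obtain u where u: "u \<in> F" "p = (u, g u)" using E(1) by blast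
        show "p \<in> insert (a, s a - 1) (E0 - {(a, 0)})"
        proof (cases "u = a")
          case True then show ?thesis using u \<open>a \<in> F \<and> g a = s a - 1\<close> by simp
        next
          case False then show ?thesis using u unfolding E0_def g'_def by force
        qed
      next
        fix p assume p: "p \<in> insert (a, s a - 1) (E0 - {(a, 0)})"
        show "p \<in> E"
        proof (cases "p = (a, s a - 1)")
          case True then show ?thesis using \<open>a \<in> F \<and> g a = s a - 1\<close> E(1) by force
        next
          case False
          then obtain u where u: "u \<in> F" "p = (u, g' u)" "p \<noteq> (a, 0)" using p unfolding E0_def by auto
          then have "u \<noteq> a" unfolding g'_def by auto
          then show ?thesis using u E(1) unfolding g'_def by force
        qed
      qed
      then have "E \<in> {insert (a, s a - 1) (F' - {(a, 0)}) | F'. F' \<in> edges (blowup H s') \<and> (a, 0) \<in> F'}"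
        using E0 a0 by blast
      then show ?thesis unfolding dup_edges by simp
    qed
  qed
  ultimately show ?thesis unfolding subgraph_def by blast
qed

lemma blowup_degen_aux:
  fixes H :: "'a hg"
  assumes hH: "hypergraph H" and eH: "edges H \<noteq> {}" and dH: "degenerate H"
  shows "\<forall>s. (\<forall>v\<in>verts H. 0 < s v) \<and> (\<Sum>u\<in>verts H. s u) = N \<longrightarrow> degenerate (blowup H s)"
proof (induction N rule: less_induct)
  case (less N)
  show ?case
  proof (intro allI impI)
    fix s assume s: "(\<forall>v\<in>verts H. 0 < s v) \<and> (\<Sum>u\<in>verts H. s u) = N"
    have fV: "finite (verts H)" using hH unfolding hypergraph_def by blast
    have hB: "hypergraph (blowup H s)" by (rule blowup_hg[OF hH])
    have eB: "edges (blowup H s) \<noteq> {}" using blowup_edges_ne[OF eH _ hH] s by blast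
    show "degenerate (blowup H s)"
    proof (cases "\<exists>a\<in>verts H. 2 \<le> s a")
      case False
      then have "\<forall>v\<in>verts H. s v \<le> 1" by auto
      then show ?thesis by (rule degen_sub[OF hB eB hH blowup_sub_base[OF hH] dH])
    next
      case True
      then obtain a where a: "a \<in> verts H" "2 \<le> s a" by blast
      define s' where "s' = s(a := s a - 1)"
      have s'pos: "\<forall>v\<in>verts H. 0 < s' v" using s a unfolding s'_def by auto
      have "(\<Sum>u\<in>verts H. s' u) < (\<Sum>u\<in>verts H. s u)"
        by (rule sum_strict_mono_ex1[OF fV]) (use a in \<open>auto simp: s'_def\<close>)
      then have dB': "degenerate (blowup H s')" using less s s'pos by blast
      have hB': "hypergraph (blowup H s')" by (rule blowup_hg[OF hH])
      have eB': "edges (blowup H s') \<noteq> {}" using blowup_edges_ne[OF eH s'pos hH] .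
      have x: "(a, 0) \<in> verts (blowup H s')" using a s'pos unfolding blowup_verts by auto
      have y: "(a, s a - 1) \<notin> verts (blowup H s')" unfolding blowup_verts s'_def by auto
      have dD: "degenerate (dup (blowup H s') (a, 0) (a, s a - 1))"
        by (rule dup_degen[OF hB' eB' dB' x y])
      have hD: "hypergraph (dup (blowup H s') (a, 0) (a, s a - 1))" by (rule dup_hg[OF hB'])
      show ?thesis
        by (rule degen_sub[OF hB eB hD _ dD]) (use blowup_step[of a H s, OF a] in \<open>simp add: s'_def\<close>)
    qed
  qed
qed

lemma blowup_degen:
  fixes H :: "'a hg"
  assumes hH: "hypergraph H" and eH: "edges H \<noteq> {}" and dH: "degenerate H"
    and s: "\<forall>v\<in>verts H. 0 < s v"
  shows "degenerate (blowup H s)"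
  using blowup_degen_aux[OF hH eH dH] s by blast

lemma noedge_pi:
  assumes hH: "hypergraph H" and eH: "edges H = {}" and n: "card (verts H) \<le> n"
  shows "pi_n H n = Sup ({} :: real set)"
proof -
  have fV: "finite (verts H)" using hH unfolding hypergraph_def by blast
  obtain f where f: "f ` verts H \<subseteq> {0..<n}" "inj_on f (verts H)"
    using card_le_inj[OF fV, of "{0..<n}"] n by auto
  have "subgraph H G" if "verts G = {0..<n}" for G :: "nat hg"
    unfolding subgraph_def using f eH that by blast
  then have "piset H n = {}" unfolding piset_def by blast
  then show ?thesis unfolding pi_n_piset by simp
qed

theorem mainTheorem12:
  fixes H :: "'a hg"
  assumes "hypergraph H" and "degenerate H"
  shows "(\<forall>H' :: 'b hg. hypergraph H' \<and> edges H' \<noteq> {} \<and> subgraph H' H \<longrightarrow> degenerate H')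
       \<and> (\<forall>s. (\<forall>v\<in>verts H. 0 < s v) \<longrightarrow> degenerate (blowup H s))
       \<and> (\<forall>(Fl :: 'c hg) t (K :: 'd hg).
            hypergraph Fl \<and> flag Fl \<and> (\<forall>v\<in>verts Fl. 0 < t v) \<and>
            hypergraph K \<and> edges K \<noteq> {} \<and> subgraph K (blowup Fl t) \<longrightarrow> degenerate K)"
proof (intro conjI allI impI)
  fix H' :: "'b hg" assume a: "hypergraph H' \<and> edges H' \<noteq> {} \<and> subgraph H' H"
  then show "degenerate H'" using degen_sub[OF _ _ assms(1) _ assms(2)] by blast
next
  fix s :: "'a \<Rightarrow> nat" assume s: "\<forall>v\<in>verts H. 0 < s v"
  show "degenerate (blowup H s)"
  proof (cases "edges H = {}")
    case False
    then show ?thesis using blowup_degen[OF assms(1) False assms(2) s] by blast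
  next
    case True
    have hB: "hypergraph (blowup H s)" by (rule blowup_hg[OF assms(1)])
    have eB: "edges (blowup H s) = {}" using True unfolding blowup_edges by blast
    have cs: "card (edge_sizes (blowup H s)) = card (edge_sizes H)"
      using True eB unfolding edge_sizes_def by simp
    have ev: "\<forall>\<^sub>F n in sequentially. pi_n H n = pi_n (blowup H s) n"
    proof (rule eventually_sequentiallyI[of "max (card (verts H)) (card (verts (blowup H s)))"])
      fix n assume "max (card (verts H)) (card (verts (blowup H s))) \<le> n"
      then show "pi_n H n = pi_n (blowup H s) n"
        using noedge_pi[OF assms(1) True] noedge_pi[OF hB eB] by simp
    qed
    have "(\<lambda>n. pi_n H n) \<longlonglongrightarrow> real (card (edge_sizes H)) - 1"
      using assms(2) unfolding degenerate_def .
    then have "(\<lambda>n. pi_n (blowup H s) n) \<longlonglongrightarrow> real (card (edge_sizes H)) - 1"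
      using ev by (rule Lim_transform_eventually)
    then show ?thesis unfolding degenerate_def cs .
  qed
next
  fix Fl :: "'c hg" and t :: "'c \<Rightarrow> nat" and K :: "'d hg"
  assume a: "hypergraph Fl \<and> flag Fl \<and> (\<forall>v\<in>verts Fl. 0 < t v) \<and>
            hypergraph K \<and> edges K \<noteq> {} \<and> subgraph K (blowup Fl t)"
  then have hF: "hypergraph Fl" and fl: "flag Fl" and tp: "\<forall>v\<in>verts Fl. 0 < t v" and hK: "hypergraph K"
    and eK: "edges K \<noteq> {}" and sub: "subgraph K (blowup Fl t)" by auto
  have eB: "edges (blowup Fl t) \<noteq> {}"
  proof -
    obtain F where F: "F \<in> edges K" using eK by blast
    obtain f where "\<forall>F\<in>edges K. f ` F \<in> edges (blowup Fl t)" using sub unfolding subgraph_def by blast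
    then show ?thesis using F by blast
  qed
  have eF: "edges Fl \<noteq> {}" using eB unfolding blowup_edges by blast
  have dF: "degenerate Fl" by (rule flag_degen[OF hF fl eF])
  have dB: "degenerate (blowup Fl t)" by (rule blowup_degen[OF hF eF dF tp])
  show "degenerate K" by (rule degen_sub[OF hK eK blowup_hg[OF hF] sub dB])
qed

end
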